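(* Let $\tau>0$, let $\Pi_\tau$ be the law of $f=\sum_{j\ge1}s_j^\tau Z_j\varphi_j$ with $s_j^\tau=(\tau^d\exp(-\tau j^{1/d}))^{1/2}$, and let $\mathbb H_\tau$ be its reproducing kernel Hilbert space. If $f_0\in\mathcal S^\beta(L)$ for some $\beta>0$ and $L>0$, then for all $\tau>0$ and all sufficiently small $\epsilon>0$, \[\inf_{h\in\mathbb H_\tau:\|h-f_0\|\le\epsilon}\|h\|_{\mathbb H_\tau}^2\le\tau^{-d}\Big(L^2e^\tau\vee\epsilon^2\exp\big(2\tau(L/\epsilon)^{1/\beta}\big)\Big).\]
   Context: $G$ is a probability distribution on $\mathcal X\subseteq\mathbb R^d$, $\|\cdot\|$ the norm of $L^2(\mathcal X,G)$, and $(\varphi_j)_{j\in\mathbb N}$ an orthonormal basis of $L^2(\mathcal X,G)$; $Z_j$ are i.i.d. $\mathcal N(0,1)$. $\mathcal S^\beta(L)=\{g\in L^2(\mathcal X,G):\sum_j j^{2\beta/d}\langle g,\varphi_j\rangle^2\le L^2\}$. The RKHS of $f=\sum_j s_jZ_j\varphi_j$ is the set of $g\in L^2(\mathcal X,G)$ with $\|g\|_{\mathbb H}^2=\sum_j\langle g,\varphi_j\rangle^2/s_j^2<\infty$, with this norm. *)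

theory Defs
  imports "HOL-Analysis.Analysis"
begin

text \<open>The space L2(X,G) is modelled as an abstract real Hilbert space 'a with an
orthonormal basis phi indexed by the positive integers j = 1, 2, ...\<close>

definition orthonormal_basis :: "(nat \<Rightarrow> 'a::{real_inner,complete_space}) \<Rightarrow> bool" where
  "orthonormal_basis \<phi> \<longleftrightarrow>
     (\<forall>i\<ge>1. \<forall>j\<ge>1. \<phi> i \<bullet> \<phi> j = (if i = j then 1 else 0)) \<and>
     closure (span (\<phi> ` {1..})) = UNIV"

definition sobolev_ball :: "(nat \<Rightarrow> 'a::real_inner) \<Rightarrow> nat \<Rightarrow> real \<Rightarrow> real \<Rightarrow> 'a set" where
  "sobolev_ball \<phi> d \<beta> L =
     {g. (\<lambda>j. real j powr (2 * \<beta> / real d) * (g \<bullet> \<phi> j)\<^sup>2) summable_on {1..} \<and>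
         (\<Sum>\<^sub>\<infinity>j\<in>{1..}. real j powr (2 * \<beta> / real d) * (g \<bullet> \<phi> j)\<^sup>2) \<le> L\<^sup>2}"

text \<open>RKHS of f = sum_j s_j Z_j phi_j: the set of g with sum_j <g,phi_j>^2 / s_j^2 finite,
and its squared norm.\<close>
definition rkhs :: "(nat \<Rightarrow> real) \<Rightarrow> (nat \<Rightarrow> 'a::real_inner) \<Rightarrow> 'a set" where
  "rkhs s \<phi> = {g. (\<lambda>j. (g \<bullet> \<phi> j)\<^sup>2 / (s j)\<^sup>2) summable_on {1..}}"

definition rkhs_sqnorm :: "(nat \<Rightarrow> real) \<Rightarrow> (nat \<Rightarrow> 'a::real_inner) \<Rightarrow> 'a \<Rightarrow> real" where
  "rkhs_sqnorm s \<phi> g = (\<Sum>\<^sub>\<infinity>j\<in>{1..}. (g \<bullet> \<phi> j)\<^sup>2 / (s j)\<^sup>2)"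

definition s_exp :: "nat \<Rightarrow> real \<Rightarrow> nat \<Rightarrow> real" where
  "s_exp d \<tau> j = sqrt (\<tau> ^ d * exp (- \<tau> * real j powr (1 / real d)))"

end

theory Submission
  imports Defs "HOL-Real_Asymp.Real_Asymp"
begin

definition proj :: "(nat \<Rightarrow> 'a::real_inner) \<Rightarrow> nat \<Rightarrow> 'a \<Rightarrow> 'a" where
  "proj \<phi> n g = (\<Sum>k\<in>{1..n}. (g \<bullet> \<phi> k) *\<^sub>R \<phi> k)"

lemma ortho_sum_inner:
  fixes \<phi> :: "nat \<Rightarrow> 'a::real_inner"
  assumes orth: "\<forall>i\<ge>1. \<forall>j\<ge>1. \<phi> i \<bullet> \<phi> j = (if i = j then 1 else 0)"
    and A: "finite A" "A \<subseteq> {1..}" and k: "k \<ge> 1"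
  shows "(\<Sum>i\<in>A. a i *\<^sub>R \<phi> i) \<bullet> \<phi> k = (if k \<in> A then a k else 0)"
proof -
  have "(\<Sum>i\<in>A. a i *\<^sub>R \<phi> i) \<bullet> \<phi> k = (\<Sum>i\<in>A. a i * (if i = k then 1 else 0))"
    unfolding inner_sum_left
    by (rule sum.cong) (use orth A k in auto)
  also have "\<dots> = (if k \<in> A then a k else 0)"
    using A by (simp add: sum.delta' if_distrib cong: if_cong)
  finally show ?thesis .
qed

lemma ortho_sum_norm:
  fixes \<phi> :: "nat \<Rightarrow> 'a::real_inner"
  assumes orth: "\<forall>i\<ge>1. \<forall>j\<ge>1. \<phi> i \<bullet> \<phi> j = (if i = j then 1 else 0)"
    and A: "finite A" "A \<subseteq> {1..}"
  shows "(norm (\<Sum>i\<in>A. a i *\<^sub>R \<phi> i))\<^sup>2 = (\<Sum>i\<in>A. (a i)\<^sup>2)"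
proof -
  have "(norm (\<Sum>i\<in>A. a i *\<^sub>R \<phi> i))\<^sup>2 = (\<Sum>i\<in>A. a i *\<^sub>R \<phi> i) \<bullet> (\<Sum>i\<in>A. a i *\<^sub>R \<phi> i)"
    by (simp add: power2_norm_eq_inner)
  also have "\<dots> = (\<Sum>k\<in>A. a k * ((\<Sum>i\<in>A. a i *\<^sub>R \<phi> i) \<bullet> \<phi> k))"
    by (simp add: inner_sum_right mult.commute)
  also have "\<dots> = (\<Sum>k\<in>A. (a k)\<^sup>2)"
    by (rule sum.cong) (use ortho_sum_inner[OF orth A] A in \<open>auto simp: power2_eq_square\<close>)
  finally show ?thesis .
qed

lemma proj_inner:
  fixes \<phi> :: "nat \<Rightarrow> 'a::real_inner"
  assumes orth: "\<forall>i\<ge>1. \<forall>j\<ge>1. \<phi> i \<bullet> \<phi> j = (if i = j then 1 else 0)"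
    and k: "k \<ge> 1"
  shows "proj \<phi> n g \<bullet> \<phi> k = (if k \<le> n then g \<bullet> \<phi> k else 0)"
  unfolding proj_def using ortho_sum_inner[OF orth, of "{1..n}" k] k by auto

lemma proj_orth:
  fixes \<phi> :: "nat \<Rightarrow> 'a::real_inner"
  assumes orth: "\<forall>i\<ge>1. \<forall>j\<ge>1. \<phi> i \<bullet> \<phi> j = (if i = j then 1 else 0)"
    and v: "v \<in> span (\<phi> ` {1..n})"
  shows "orthogonal (g - proj \<phi> n g) v"
  using v
proof (rule orthogonal_to_span)
  fix y assume "y \<in> \<phi> ` {1..n}"
  then obtain k where "k \<in> {1..n}" "y = \<phi> k" by auto
  then show "orthogonal (g - proj \<phi> n g) y"
    using proj_inner[OF orth, of k n g] by (simp add: orthogonal_def inner_diff_left)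
qed

lemma proj_in_span:
  "proj \<phi> n g \<in> span (\<phi> ` {1..n})"
  unfolding proj_def by (intro span_sum span_scale span_base) auto

lemma span_union_finite:
  fixes \<phi> :: "nat \<Rightarrow> 'a::real_vector"
  assumes "v \<in> span (\<phi> ` {1..})"
  shows "\<exists>N. v \<in> span (\<phi> ` {1..N})"
  using assms
proof (induction rule: span_induct_alt)
  case base
  then show ?case by (auto intro: span_zero)
next
  case (step c x y)
  then obtain N k where N: "y \<in> span (\<phi> ` {1..N})" and k: "k \<ge> 1" "x = \<phi> k" by auto
  let ?M = "max N k"
  have "span (\<phi> ` {1..N}) \<subseteq> span (\<phi> ` {1..?M})" by (intro span_mono image_mono) (use max.coboundedI1 in auto)
  moreover have "x \<in> span (\<phi> ` {1..?M})" using k by (intro span_base) auto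
  ultimately have "c *\<^sub>R x + y \<in> span (\<phi> ` {1..?M})"
    using N by (intro span_add span_scale) auto
  then show ?case by blast
qed

lemma proj_approx:
  fixes \<phi> :: "nat \<Rightarrow> 'a::{real_inner,complete_space}"
  assumes ob: "orthonormal_basis \<phi>" and e: "e > 0"
  shows "\<exists>N. \<forall>n\<ge>N. norm (g - proj \<phi> n g) < e"
proof -
  have orth: "\<forall>i\<ge>1. \<forall>j\<ge>1. \<phi> i \<bullet> \<phi> j = (if i = j then 1 else 0)"
    and cl: "closure (span (\<phi> ` {1..})) = UNIV" using ob unfolding orthonormal_basis_def by auto
  have "g \<in> closure (span (\<phi> ` {1..}))" using cl by simp
  then obtain v where v: "v \<in> span (\<phi> ` {1..})" "dist v g < e"
    using e closure_approachable by metis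
  obtain N where N: "v \<in> span (\<phi> ` {1..N})" using span_union_finite[OF v(1)] by blast
  have "norm (g - proj \<phi> n g) < e" if "n \<ge> N" for n
  proof -
    have vn: "v \<in> span (\<phi> ` {1..n})"
      using N span_mono[of "\<phi> ` {1..N}" "\<phi> ` {1..n}"] that image_mono[of "{1..N}" "{1..n}" \<phi>] by auto
    have "proj \<phi> n g - v \<in> span (\<phi> ` {1..n})"
      by (intro span_diff proj_in_span vn)
    then have "orthogonal (g - proj \<phi> n g) (proj \<phi> n g - v)"
      by (rule proj_orth[OF orth])
    then have "(norm (g - v))\<^sup>2 = (norm (g - proj \<phi> n g))\<^sup>2 + (norm (proj \<phi> n g - v))\<^sup>2"
      using norm_add_Pythagorean by fastforce
    then have "(norm (g - proj \<phi> n g))\<^sup>2 \<le> (norm (g - v))\<^sup>2" by simp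
    then have "norm (g - proj \<phi> n g) \<le> norm (g - v)"
      by (simp add: power_mono_iff)
    also have "\<dots> < e" using v(2) by (simp add: dist_norm norm_minus_commute)
    finally show ?thesis .
  qed
  then show ?thesis by blast
qed


lemma pow_plus_one_le:
  fixes x :: real
  assumes "x \<ge> 0" "d \<ge> 1"
  shows "x ^ d + 1 \<le> (x + 1) ^ d"
  using assms(2)
proof (induction d rule: nat_induct_at_least)
  case base
  then show ?case by simp
next
  case (Suc n)
  have "x ^ Suc n + 1 \<le> (x + 1) * (x ^ n + 1)"
    using assms(1) by (simp add: algebra_simps)
  also have "\<dots> \<le> (x + 1) * (x + 1) ^ n"
    using Suc.IH assms(1) by (intro mult_left_mono) auto
  finally show ?case by simp
qed

lemma proj_split:
  fixes \<phi> :: "nat \<Rightarrow> 'a::real_inner"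
  assumes orth: "\<forall>i\<ge>1. \<forall>j\<ge>1. \<phi> i \<bullet> \<phi> j = (if i = j then 1 else 0)"
    and mn: "m \<le> n"
  shows "(norm (g - proj \<phi> m g))\<^sup>2 = (norm (g - proj \<phi> n g))\<^sup>2
           + (\<Sum>k\<in>{1..n} - {1..m}. (g \<bullet> \<phi> k)\<^sup>2)"
proof -
  have eq: "proj \<phi> n g - proj \<phi> m g = (\<Sum>k\<in>{1..n} - {1..m}. (g \<bullet> \<phi> k) *\<^sub>R \<phi> k)"
    unfolding proj_def using mn by (subst sum_diff) auto
  have "proj \<phi> n g - proj \<phi> m g \<in> span (\<phi> ` {1..n})"
    using mn proj_in_span[of \<phi> n g] proj_in_span[of \<phi> m g]
      span_mono[of "\<phi> ` {1..m}" "\<phi> ` {1..n}"] image_mono[of "{1..m}" "{1..n}" \<phi>]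
    by (intro span_diff) auto
  then have o: "orthogonal (g - proj \<phi> n g) (proj \<phi> n g - proj \<phi> m g)"
    by (rule proj_orth[OF orth])
  have "g - proj \<phi> m g = (g - proj \<phi> n g) + (proj \<phi> n g - proj \<phi> m g)" by simp
  then have "(norm (g - proj \<phi> m g))\<^sup>2 = (norm (g - proj \<phi> n g))\<^sup>2 + (norm (proj \<phi> n g - proj \<phi> m g))\<^sup>2"
    using norm_add_Pythagorean[OF o] by simp
  also have "(norm (proj \<phi> n g - proj \<phi> m g))\<^sup>2 = (\<Sum>k\<in>{1..n} - {1..m}. (g \<bullet> \<phi> k)\<^sup>2)"
    unfolding eq by (rule ortho_sum_norm[OF orth]) auto
  finally show ?thesis .
qed

theorem lemma9:
  fixes \<phi> :: "nat \<Rightarrow> 'a::{real_inner,complete_space}"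
    and f0 :: 'a and d :: nat and \<beta> L :: real
  assumes "orthonormal_basis \<phi>"
    and "d \<ge> 1"
    and "\<beta> > 0" and "L > 0"
    and "f0 \<in> sobolev_ball \<phi> d \<beta> L"
  shows "\<forall>\<tau>>0. \<forall>\<^sub>F \<epsilon> in at_right 0.
           Inf {rkhs_sqnorm (s_exp d \<tau>) \<phi> h | h. h \<in> rkhs (s_exp d \<tau>) \<phi> \<and> norm (h - f0) \<le> \<epsilon>}
             \<le> \<tau> powr (- real d) *
                max (L\<^sup>2 * exp \<tau>) (\<epsilon>\<^sup>2 * exp (2 * \<tau> * (L / \<epsilon>) powr (1 / \<beta>)))"
proof (intro allI impI)
  fix \<tau> :: real
  assume tau: "\<tau> > 0"
  note ob = assms(1)
  have orth: "\<forall>i\<ge>1. \<forall>j\<ge>1. \<phi> i \<bullet> \<phi> j = (if i = j then 1 else 0)"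
    using ob unfolding orthonormal_basis_def by auto
  have d: "d \<ge> 1" and beta: "\<beta> > 0" and L: "L > 0" using assms by auto
  define c where "c k = f0 \<bullet> \<phi> k" for k
  define p where "p = 2 * \<beta> / real d"
  have p: "p \<ge> 0" using beta d by (simp add: p_def)
  define w where "w j = real j powr p * (c j)\<^sup>2" for j
  have wsum: "w summable_on {1..}" and wle: "(\<Sum>\<^sub>\<infinity>j\<in>{1..}. w j) \<le> L\<^sup>2"
    using assms(5) unfolding sobolev_ball_def w_def c_def p_def by auto
  have F1: "sum w B \<le> L\<^sup>2" if "finite B" "B \<subseteq> {1..}" for B
  proof -
    have "sum w B \<le> (\<Sum>\<^sub>\<infinity>j\<in>{1..}. w j)"
      by (rule finite_sum_le_infsum[OF wsum that]) (auto simp: w_def)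
    then show ?thesis using wle by linarith
  qed
  have F2: "(\<Sum>k\<in>{1..J}. (c k)\<^sup>2) \<le> L\<^sup>2" for J
  proof -
    have "(\<Sum>k\<in>{1..J}. (c k)\<^sup>2) \<le> sum w {1..J}"
      unfolding w_def
    proof (rule sum_mono)
      fix k assume "k \<in> {1..J}"
      then have "1 \<le> real k powr p" using p by (intro ge_one_powr_ge_zero) auto
      then show "(c k)\<^sup>2 \<le> real k powr p * (c k)\<^sup>2"
        using mult_right_mono[of 1 "real k powr p" "(c k)\<^sup>2"] by simp
    qed
    also have "\<dots> \<le> L\<^sup>2" by (rule F1) auto
    finally show ?thesis .
  qed
  have F3: "real J powr p * (\<Sum>k\<in>{1..n} - {1..J}. (c k)\<^sup>2) \<le> L\<^sup>2" if "J \<ge> 1" for J n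
  proof -
    have "real J powr p * (\<Sum>k\<in>{1..n} - {1..J}. (c k)\<^sup>2) = (\<Sum>k\<in>{1..n} - {1..J}. real J powr p * (c k)\<^sup>2)"
      by (simp add: sum_distrib_left)
    also have "\<dots> \<le> sum w ({1..n} - {1..J})"
      unfolding w_def
    proof (rule sum_mono)
      fix k assume "k \<in> {1..n} - {1..J}"
      then have "real J powr p \<le> real k powr p" using p that by (intro powr_mono2) auto
      then show "real J powr p * (c k)\<^sup>2 \<le> real k powr p * (c k)\<^sup>2"
        by (intro mult_right_mono) auto
    qed
    also have "\<dots> \<le> L\<^sup>2" by (rule F1) auto
    finally show ?thesis .
  qed
  define x where "x \<epsilon> = (L / \<epsilon>) powr (1 / \<beta>)" for \<epsilon> :: real
  have lim: "filterlim (\<lambda>\<epsilon>::real. \<epsilon>\<^sup>2 * exp (\<tau> * (L / \<epsilon>) powr (1 / \<beta>))) at_top (at_right 0)"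
    using tau L beta by real_asymp
  have ev1: "\<forall>\<^sub>F \<epsilon> in at_right 0. L\<^sup>2 * exp \<tau> \<le> \<epsilon>\<^sup>2 * exp (\<tau> * x \<epsilon>)"
    using lim unfolding filterlim_at_top x_def by blast
  have ev2: "\<forall>\<^sub>F \<epsilon> in at_right (0::real). 0 < \<epsilon> \<and> \<epsilon> < L"
    using L by (simp add: eventually_at_right_field) (metis)
  show "\<forall>\<^sub>F \<epsilon> in at_right 0.
           Inf {rkhs_sqnorm (s_exp d \<tau>) \<phi> h | h. h \<in> rkhs (s_exp d \<tau>) \<phi> \<and> norm (h - f0) \<le> \<epsilon>}
             \<le> \<tau> powr (- real d) *
                max (L\<^sup>2 * exp \<tau>) (\<epsilon>\<^sup>2 * exp (2 * \<tau> * (L / \<epsilon>) powr (1 / \<beta>)))"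
    using ev1 ev2
  proof eventually_elim
    case (elim \<epsilon>)
    then have eps: "0 < \<epsilon>" "\<epsilon> < L" and key: "L\<^sup>2 * exp \<tau> \<le> \<epsilon>\<^sup>2 * exp (\<tau> * x \<epsilon>)" by auto
    define X where "X = x \<epsilon>"
    have X1: "X > 1" unfolding X_def x_def using eps beta by (intro gr_one_powr) auto
    define J where "J = nat \<lceil>X ^ d\<rceil>"
    have XdJ: "X ^ d \<le> real J" unfolding J_def by linarith
    have JXd: "real J \<le> X ^ d + 1" unfolding J_def
      using X1 by simp
    have "1 \<le> X ^ d" using X1 by simp
    then have J1: "J \<ge> 1" using XdJ by linarith
    define h where "h = proj \<phi> J f0"
    have hin: "h \<bullet> \<phi> k = (if k \<le> J then c k else 0)" if "k \<ge> 1" for k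
      unfolding h_def c_def using proj_inner[OF orth that] by simp
    let ?s = "s_exp d \<tau>"
    let ?f = "\<lambda>j. (h \<bullet> \<phi> j)\<^sup>2 / (?s j)\<^sup>2"
    have cong: "?f k = (if k \<in> {1..J} then (c k)\<^sup>2 / (?s k)\<^sup>2 else 0)" if "k \<in> {1..}" for k
      using hin that by auto
    have hr: "h \<in> rkhs ?s \<phi>"
      unfolding rkhs_def
    proof -
      have "?f summable_on {1..} \<longleftrightarrow> (\<lambda>k. (c k)\<^sup>2 / (?s k)\<^sup>2) summable_on {1..J}"
        by (rule summable_on_cong_neutral) (use cong in auto)
      then show "h \<in> {g. (\<lambda>j. (g \<bullet> \<phi> j)\<^sup>2 / (?s j)\<^sup>2) summable_on {1..}}" by simp
    qed
    have hn: "rkhs_sqnorm ?s \<phi> h = (\<Sum>k\<in>{1..J}. (c k)\<^sup>2 / (?s k)\<^sup>2)"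
    proof -
      have "rkhs_sqnorm ?s \<phi> h = (\<Sum>\<^sub>\<infinity>k\<in>{1..J}. (c k)\<^sup>2 / (?s k)\<^sup>2)"
        unfolding rkhs_sqnorm_def
        by (rule infsum_cong_neutral) (use cong in auto)
      then show ?thesis by simp
    qed
    have s2: "(?s k)\<^sup>2 = \<tau> ^ d * exp (- \<tau> * real k powr (1 / real d))" for k
      unfolding s_exp_def using tau by simp
    have Jroot: "real J powr (1 / real d) \<le> X + 1"
    proof -
      have "real J \<le> (X + 1) ^ d" using JXd pow_plus_one_le[of X d] X1 d by linarith
      then have "real J powr (1 / real d) \<le> ((X + 1) ^ d) powr (1 / real d)"
        by (intro powr_mono2) auto
      also have "\<dots> = X + 1"
        using X1 d by (simp add: powr_realpow[symmetric] powr_powr)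
      finally show ?thesis .
    qed
    have "rkhs_sqnorm ?s \<phi> h \<le> (\<Sum>k\<in>{1..J}. (c k)\<^sup>2 * exp (\<tau> * (X + 1)) / \<tau> ^ d)"
      unfolding hn
    proof (rule sum_mono)
      fix k assume k: "k \<in> {1..J}"
      have "real k powr (1 / real d) \<le> real J powr (1 / real d)"
        using k by (intro powr_mono2) auto
      then have "\<tau> * real k powr (1 / real d) \<le> \<tau> * (X + 1)" using Jroot tau by simp
      then have e: "exp (\<tau> * real k powr (1 / real d)) \<le> exp (\<tau> * (X + 1))" by simp
      have "(c k)\<^sup>2 / (?s k)\<^sup>2 = (c k)\<^sup>2 * exp (\<tau> * real k powr (1 / real d)) / \<tau> ^ d"
        unfolding s2 using tau by (simp add: exp_minus field_simps)
      also have "\<dots> \<le> (c k)\<^sup>2 * exp (\<tau> * (X + 1)) / \<tau> ^ d"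
        using e tau by (intro divide_right_mono mult_left_mono) auto
      finally show "(c k)\<^sup>2 / (?s k)\<^sup>2 \<le> (c k)\<^sup>2 * exp (\<tau> * (X + 1)) / \<tau> ^ d" .
    qed
    also have "\<dots> = (\<Sum>k\<in>{1..J}. (c k)\<^sup>2) * exp (\<tau> * (X + 1)) / \<tau> ^ d"
      by (simp add: sum_divide_distrib sum_distrib_right)
    also have "\<dots> \<le> L\<^sup>2 * exp (\<tau> * (X + 1)) / \<tau> ^ d"
      using F2[of J] tau by (intro divide_right_mono mult_right_mono) auto
    also have "\<dots> = (L\<^sup>2 * exp \<tau>) * exp (\<tau> * X) / \<tau> ^ d"
      by (simp add: distrib_left exp_add mult.commute)
    also have "\<dots> \<le> (\<epsilon>\<^sup>2 * exp (\<tau> * X)) * exp (\<tau> * X) / \<tau> ^ d"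
      using key tau unfolding X_def by (intro divide_right_mono mult_right_mono) auto
    also have "\<dots> = \<epsilon>\<^sup>2 * exp (2 * \<tau> * X) / \<tau> ^ d"
      by (simp add: exp_add[symmetric])
    also have "\<dots> \<le> \<tau> powr (- real d) *
                max (L\<^sup>2 * exp \<tau>) (\<epsilon>\<^sup>2 * exp (2 * \<tau> * (L / \<epsilon>) powr (1 / \<beta>)))"
      using tau unfolding X_def x_def
      by (simp add: powr_minus powr_realpow divide_inverse mult.commute)
    finally have bound: "rkhs_sqnorm ?s \<phi> h \<le> \<tau> powr (- real d) *
                max (L\<^sup>2 * exp \<tau>) (\<epsilon>\<^sup>2 * exp (2 * \<tau> * (L / \<epsilon>) powr (1 / \<beta>)))" .
    have Jp: "real J powr p \<ge> (L / \<epsilon>)\<^sup>2"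
    proof -
      have "(X ^ d) powr p \<le> real J powr p" using XdJ X1 p by (intro powr_mono2) auto
      moreover have "(X ^ d) powr p = (L / \<epsilon>)\<^sup>2"
      proof -
        have "(X ^ d) powr p = X powr (real d * p)"
          using X1 by (simp add: powr_realpow[symmetric] powr_powr)
        also have "\<dots> = (L / \<epsilon>) powr ((1 / \<beta>) * (real d * p))"
          unfolding X_def x_def using eps L by (simp add: powr_powr)
        also have "(1 / \<beta>) * (real d * p) = 2" unfolding p_def using beta d by simp
        finally show ?thesis using eps L by simp
      qed
      ultimately show ?thesis by simp
    qed
    have tail: "(\<Sum>k\<in>{1..n} - {1..J}. (c k)\<^sup>2) \<le> \<epsilon>\<^sup>2" for n
    proof -
      have pos: "real J powr p > 0" using J1 by simp
      have "(L / \<epsilon>)\<^sup>2 * (\<Sum>k\<in>{1..n} - {1..J}. (c k)\<^sup>2) \<le> real J powr p * (\<Sum>k\<in>{1..n} - {1..J}. (c k)\<^sup>2)"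
        using Jp by (intro mult_right_mono sum_nonneg) auto
      also have "\<dots> \<le> L\<^sup>2" using F3[OF J1] .
      finally have "(L / \<epsilon>)\<^sup>2 * (\<Sum>k\<in>{1..n} - {1..J}. (c k)\<^sup>2) \<le> L\<^sup>2" .
      then show ?thesis using eps L by (simp add: field_simps power2_eq_square)
    qed
    have "(norm (f0 - h))\<^sup>2 \<le> \<epsilon>\<^sup>2"
    proof (rule field_le_epsilon)
      fix e :: real assume e: "e > 0"
      obtain N where N: "\<forall>n\<ge>N. norm (f0 - proj \<phi> n f0) < sqrt e"
        using proj_approx[OF ob, of "sqrt e" f0] e by auto
      define n where "n = max N J"
      have "(norm (f0 - h))\<^sup>2 = (norm (f0 - proj \<phi> n f0))\<^sup>2 + (\<Sum>k\<in>{1..n} - {1..J}. (c k)\<^sup>2)"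
        unfolding h_def c_def n_def by (rule proj_split[OF orth]) simp
      also have "(norm (f0 - proj \<phi> n f0))\<^sup>2 \<le> e"
      proof -
        have "norm (f0 - proj \<phi> n f0) < sqrt e" using N n_def by simp
        then have "(norm (f0 - proj \<phi> n f0))\<^sup>2 \<le> (sqrt e)\<^sup>2"
          by (intro power_mono) auto
        then show ?thesis using e by simp
      qed
      finally show "(norm (f0 - h))\<^sup>2 \<le> \<epsilon>\<^sup>2 + e" using tail[of n] by linarith
    qed
    then have "norm (f0 - h) \<le> \<epsilon>"
      by (rule power2_le_imp_le[OF _ less_imp_le[OF eps(1)]])
    then have dist: "norm (h - f0) \<le> \<epsilon>"
      using norm_minus_commute[of h f0] by linarith
    let ?A = "{rkhs_sqnorm ?s \<phi> h | h. h \<in> rkhs ?s \<phi> \<and> norm (h - f0) \<le> \<epsilon>}"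
    have mem: "rkhs_sqnorm ?s \<phi> h \<in> ?A" using hr dist by blast
    have bdd: "bdd_below ?A"
      unfolding rkhs_sqnorm_def by (rule bdd_belowI[of _ 0]) (auto intro!: infsum_nonneg)
    have "Inf ?A \<le> rkhs_sqnorm ?s \<phi> h" by (rule cInf_lower[OF mem bdd])
    then show ?case using bound by linarith
  qed
qed

end
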